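(* Let $G$ be a loopless multigraph, $k\ge1$, $M$ a maximal $k$-edge-colorable subgraph of $G$, $\psi$ a proper $k$-edge-coloring of $M$, and $y\in V(G)$ with $d_M(y)<k$. Then for all distinct $w,z \in N_M(y) \cup \{y\}$, we have $C(w) \cap C(z) = \emptyset$.
   Context: $\mu_G(v,w)$ (resp. $\mu_M(v,w)$) is the number of edges of $G$ (resp. $M$) joining $v,w$; $d_M(v)$ is the number of $M$-edges at $v$; $N_M(y)$ is the set of neighbors of $y$ in $M$. $F_k(y)=\{w\in N_G(y): d_M(w)\le k-\mu_G(y,w)\}$ and $U_k(y)=\{w\in F_k(y): \mu_M(y,w)<\mu_G(y,w)\}$. For distinct vertices $w,z$, $\psi(w,z)$ is the set of colors used by $\psi$ on edges of $M$ joining $w$ and $z$; $\psi(w)$ is the set of colors on $M$-edges incident to $w$; $O(w)=\{1,\dots,k\}\setminus\psi(w)$. For each $u\in U_k(y)$, $H_u$ is the multidigraph on vertex set $N_M(y)\cup\{u\}$ in which the number of arcs from $w$ to $z$ is $|O(w)\cap\psi(y,z)|$. A vertex $z\in N_M(y)$ is remote if for every $u\in U_k(y)$, $z$ is not reachable from $u$ by a directed path in $H_u$. For $w\in U_k(y)\cup N_M(y)\cup\{y\}$: $C(w)=\psi(y,w)$ if $w$ is remote, and $C(w)=O(w)$ otherwise (so $C(y)=O(y)$). *)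

theory Defs
  imports Main
begin

text \<open>A loopless multigraph: vertex set V, edge set E (edges are distinct objects, so
parallel edges are allowed), and an endpoint map ends assigning each edge a 2-element
set of vertices.  A subgraph M is given by a subset of the edges (spanning).\<close>

definition loopless_multigraph :: "'v set \<Rightarrow> 'e set \<Rightarrow> ('e \<Rightarrow> 'v set) \<Rightarrow> bool" where
  "loopless_multigraph V E ends \<longleftrightarrow> finite V \<and> finite E \<and>
     (\<forall>e\<in>E. ends e \<subseteq> V \<and> card (ends e) = 2)"

definition mult :: "'e set \<Rightarrow> ('e \<Rightarrow> 'v set) \<Rightarrow> 'v \<Rightarrow> 'v \<Rightarrow> nat" where
  "mult A ends v w = card {e\<in>A. ends e = {v, w}}"

definition deg :: "'e set \<Rightarrow> ('e \<Rightarrow> 'v set) \<Rightarrow> 'v \<Rightarrow> nat" where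
  "deg A ends v = card {e\<in>A. v \<in> ends e}"

definition nbrs :: "'e set \<Rightarrow> ('e \<Rightarrow> 'v set) \<Rightarrow> 'v \<Rightarrow> 'v set" where
  "nbrs A ends y = {w. \<exists>e\<in>A. ends e = {y, w}}"

definition proper_coloring :: "'e set \<Rightarrow> ('e \<Rightarrow> 'v set) \<Rightarrow> nat \<Rightarrow> ('e \<Rightarrow> nat) \<Rightarrow> bool" where
  "proper_coloring A ends k \<psi> \<longleftrightarrow>
     (\<forall>e\<in>A. \<psi> e \<in> {1..k}) \<and>
     (\<forall>e\<in>A. \<forall>f\<in>A. e \<noteq> f \<and> ends e \<inter> ends f \<noteq> {} \<longrightarrow> \<psi> e \<noteq> \<psi> f)"

definition k_colorable :: "'e set \<Rightarrow> ('e \<Rightarrow> 'v set) \<Rightarrow> nat \<Rightarrow> bool" where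
  "k_colorable A ends k \<longleftrightarrow> (\<exists>\<psi>. proper_coloring A ends k \<psi>)"

definition maximal_k_colorable_sub :: "'e set \<Rightarrow> ('e \<Rightarrow> 'v set) \<Rightarrow> nat \<Rightarrow> 'e set \<Rightarrow> bool" where
  "maximal_k_colorable_sub E ends k M \<longleftrightarrow>
     M \<subseteq> E \<and> k_colorable M ends k \<and>
     (\<forall>M'. M \<subset> M' \<and> M' \<subseteq> E \<longrightarrow> \<not> k_colorable M' ends k)"

definition Fk :: "'e set \<Rightarrow> 'e set \<Rightarrow> ('e \<Rightarrow> 'v set) \<Rightarrow> nat \<Rightarrow> 'v \<Rightarrow> 'v set" where
  "Fk E M ends k y = {w \<in> nbrs E ends y.
      int (deg M ends w) \<le> int k - int (mult E ends y w)}"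

definition Uk :: "'e set \<Rightarrow> 'e set \<Rightarrow> ('e \<Rightarrow> 'v set) \<Rightarrow> nat \<Rightarrow> 'v \<Rightarrow> 'v set" where
  "Uk E M ends k y = {w \<in> Fk E M ends k y. mult M ends y w < mult E ends y w}"

definition colors_between :: "'e set \<Rightarrow> ('e \<Rightarrow> 'v set) \<Rightarrow> ('e \<Rightarrow> nat) \<Rightarrow> 'v \<Rightarrow> 'v \<Rightarrow> nat set" where
  "colors_between M ends \<psi> w z = \<psi> ` {e\<in>M. ends e = {w, z}}"

definition colors_at :: "'e set \<Rightarrow> ('e \<Rightarrow> 'v set) \<Rightarrow> ('e \<Rightarrow> nat) \<Rightarrow> 'v \<Rightarrow> nat set" where
  "colors_at M ends \<psi> w = \<psi> ` {e\<in>M. w \<in> ends e}"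

definition missing :: "'e set \<Rightarrow> ('e \<Rightarrow> 'v set) \<Rightarrow> ('e \<Rightarrow> nat) \<Rightarrow> nat \<Rightarrow> 'v \<Rightarrow> nat set" where
  "missing M ends \<psi> k w = {1..k} - colors_at M ends \<psi> w"

definition H_verts :: "'e set \<Rightarrow> ('e \<Rightarrow> 'v set) \<Rightarrow> 'v \<Rightarrow> 'v \<Rightarrow> 'v set" where
  "H_verts M ends y u = nbrs M ends y \<union> {u}"

definition H_arcs :: "'e set \<Rightarrow> ('e \<Rightarrow> 'v set) \<Rightarrow> ('e \<Rightarrow> nat) \<Rightarrow> nat \<Rightarrow> 'v \<Rightarrow> 'v \<Rightarrow> 'v \<Rightarrow> nat" where
  "H_arcs M ends \<psi> k y w z = card (missing M ends \<psi> k w \<inter> colors_between M ends \<psi> y z)"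

definition H_reach :: "'e set \<Rightarrow> ('e \<Rightarrow> 'v set) \<Rightarrow> ('e \<Rightarrow> nat) \<Rightarrow> nat \<Rightarrow> 'v \<Rightarrow> 'v \<Rightarrow> 'v \<Rightarrow> bool" where
  "H_reach M ends \<psi> k y u z \<longleftrightarrow>
     (\<lambda>a b. a \<in> H_verts M ends y u \<and> b \<in> H_verts M ends y u \<and>
            H_arcs M ends \<psi> k y a b > 0)\<^sup>*\<^sup>* u z"

definition remote :: "'e set \<Rightarrow> 'e set \<Rightarrow> ('e \<Rightarrow> 'v set) \<Rightarrow> ('e \<Rightarrow> nat) \<Rightarrow> nat \<Rightarrow> 'v \<Rightarrow> 'v \<Rightarrow> bool" where
  "remote E M ends \<psi> k y z \<longleftrightarrow> z \<in> nbrs M ends y \<and>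
     (\<forall>u \<in> Uk E M ends k y. \<not> H_reach M ends \<psi> k y u z)"

definition Cset :: "'e set \<Rightarrow> 'e set \<Rightarrow> ('e \<Rightarrow> 'v set) \<Rightarrow> ('e \<Rightarrow> nat) \<Rightarrow> nat \<Rightarrow> 'v \<Rightarrow> 'v \<Rightarrow> nat set" where
  "Cset E M ends \<psi> k y w =
     (if remote E M ends \<psi> k y w then colors_between M ends \<psi> y w else missing M ends \<psi> k w)"

end

theory Submission
  imports Defs
begin

locale S =
  fixes V :: "'v set" and E :: "'e set" and ends :: "'e \<Rightarrow> 'v set" and k :: nat and M :: "'e set" and y :: 'v
  assumes lm: "loopless_multigraph V E ends" and mx: "maximal_k_colorable_sub E ends k M"
begin

definition Rel :: "('e \<Rightarrow> nat) \<Rightarrow> 'v \<Rightarrow> 'v \<Rightarrow> 'v \<Rightarrow> bool" where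
  "Rel \<psi> u a b \<longleftrightarrow> a \<in> H_verts M ends y u \<and> b \<in> H_verts M ends y u \<and> H_arcs M ends \<psi> k y a b > 0"

lemma ME: "M \<subseteq> E" using mx unfolding maximal_k_colorable_sub_def by auto
lemma finE: "finite E" using lm unfolding loopless_multigraph_def by auto
lemma finM: "finite M" using ME finE finite_subset by auto
lemma ends_neq: "e \<in> E \<Longrightarrow> ends e = {a,b} \<Longrightarrow> a \<noteq> b"
  using lm unfolding loopless_multigraph_def by force
lemma ends_neqM: "e \<in> M \<Longrightarrow> ends e = {a,b} \<Longrightarrow> a \<noteq> b"
  using ends_neq ME by blast
lemma y_nbr: "y \<notin> nbrs M ends y"
  unfolding nbrs_def using ends_neqM by force
lemma Hv_ne: "u \<noteq> y \<Longrightarrow> a \<in> H_verts M ends y u \<Longrightarrow> a \<noteq> y"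
  unfolding H_verts_def using y_nbr by auto

lemma arcs_pos: "H_arcs M ends \<psi> k y a b > 0 \<longleftrightarrow> (\<exists>c. c \<in> missing M ends \<psi> k a \<and> c \<in> colors_between M ends \<psi> y b)"
proof -
  have "finite (missing M ends \<psi> k a)" unfolding missing_def by auto
  then show ?thesis unfolding H_arcs_def by (auto simp: card_gt_0_iff)
qed

lemma reach_conv: "H_reach M ends \<psi> k y u z \<longleftrightarrow> (Rel \<psi> u)\<^sup>*\<^sup>* u z"
  unfolding H_reach_def Rel_def by (simp add: fun_eq_iff)

lemma nbr_ne: "u \<in> nbrs E ends y \<Longrightarrow> u \<noteq> y"
  unfolding nbrs_def using ends_neq by force

lemma avoid:
  assumes "(R ^^ j) s t" "s \<noteq> v"
  shows "((\<lambda>a b. R a b \<and> a \<noteq> v \<and> b \<noteq> v) ^^ j) s t \<or> (\<exists>i\<le>j. (R ^^ i) s v)"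
  using assms
proof (induction j arbitrary: t)
  case 0 then show ?case by auto
next
  case (Suc j)
  from Suc.prems(1) obtain t' where t': "(R ^^ j) s t'" "R t' t" by (rule relpowp_Suc_E)
  show ?case
  proof (cases "t' = v")
    case True then show ?thesis using t' by (metis le_SucI order_refl)
  next
    case False
    show ?thesis
    proof (cases "t = v")
      case True then show ?thesis using Suc.prems(1) by blast
    next
      case tv: False
      from Suc.IH[OF t'(1) Suc.prems(2)] show ?thesis
      proof
        assume "((\<lambda>a b. R a b \<and> a \<noteq> v \<and> b \<noteq> v) ^^ j) s t'"
        moreover have "(\<lambda>a b. R a b \<and> a \<noteq> v \<and> b \<noteq> v) t' t" using t'(2) False tv by simp
        ultimately show ?thesis using relpowp_Suc_I[where P="\<lambda>a b. R a b \<and> a \<noteq> v \<and> b \<noteq> v"] by blast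
      next
        assume "\<exists>i\<le>j. (R ^^ i) s v" then show ?thesis by (meson le_SucI)
      qed
    qed
  qed
qed

lemma proper_upd:
  assumes "proper_coloring A ends k \<psi>" "c \<in> {1..k}"
    "\<forall>f\<in>A. f \<noteq> e0 \<longrightarrow> ends f \<inter> ends e0 \<noteq> {} \<longrightarrow> \<psi> f \<noteq> c"
  shows "proper_coloring (insert e0 A) ends k (\<psi>(e0:=c))"
  unfolding proper_coloring_def
proof (intro conjI ballI impI)
  fix e assume "e \<in> insert e0 A" then show "(\<psi>(e0:=c)) e \<in> {1..k}"
    using assms unfolding proper_coloring_def by auto
next
  fix e f assume "e \<in> insert e0 A" "f \<in> insert e0 A" "e \<noteq> f \<and> ends e \<inter> ends f \<noteq> {}"
  then show "(\<psi>(e0:=c)) e \<noteq> (\<psi>(e0:=c)) f"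
    using assms unfolding proper_coloring_def by (auto simp: Int_commute; blast)
qed

lemma claimA:
  assumes "proper_coloring M ends k \<psi>" "e0 \<in> E" "e0 \<notin> M" "ends e0 = {y,u}"
    "(Rel \<psi> u ^^ n) u v" "c \<in> missing M ends \<psi> k y" "c \<in> missing M ends \<psi> k v"
  shows False
  using assms
proof (induction n arbitrary: \<psi> v c rule: less_induct)
  case (less n)
  have uy: "u \<noteq> y" using ends_neq[OF less.prems(2,4)] by auto
  show False
  proof (cases "\<exists>m<n. (Rel \<psi> u ^^ m) u v")
    case True
    then obtain m where "m < n" "(Rel \<psi> u ^^ m) u v" by blast
    then show False using less.IH less.prems by blast
  next
    case minimal: False
    show False
    proof (cases n)
      case 0
      then have "v = u" using less.prems(5) by simp
      define \<phi> where "\<phi> = \<psi>(e0 := c)"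
      have "proper_coloring (insert e0 M) ends k \<phi>"
        unfolding \<phi>_def
        apply (rule proper_upd[OF less.prems(1)])
        using less.prems(4,6,7) \<open>v = u\<close> unfolding missing_def colors_at_def by auto
      then have "k_colorable (insert e0 M) ends k" unfolding k_colorable_def by blast
      moreover have "M \<subset> insert e0 M" "insert e0 M \<subseteq> E" using less.prems(2,3) ME by auto
      ultimately show False using mx unfolding maximal_k_colorable_sub_def by blast
    next
      case (Suc m)
      from less.prems(5) obtain a where a: "(Rel \<psi> u ^^ m) u a" "Rel \<psi> u a v"
        unfolding Suc by (rule relpowp_Suc_E)
      then obtain d where d: "d \<in> missing M ends \<psi> k a" "d \<in> colors_between M ends \<psi> y v"
        unfolding Rel_def arcs_pos by blast
      then obtain e1 where e1: "e1 \<in> M" "ends e1 = {y,v}" "\<psi> e1 = d"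
        unfolding colors_between_def by auto
      have av: "a \<noteq> v" using minimal a(1) Suc by blast
      have ay: "a \<noteq> y" using a(2) Hv_ne[OF uy] unfolding Rel_def by blast
      have uv: "u \<noteq> v" using minimal Suc by force
      define \<phi> where "\<phi> = \<psi>(e1 := c)"
      have pr: "proper_coloring M ends k \<phi>"
      proof -
        have "proper_coloring (insert e1 M) ends k \<phi>"
          unfolding \<phi>_def
          apply (rule proper_upd[OF less.prems(1)])
          using less.prems(6,7) e1 unfolding missing_def colors_at_def by auto
        then show ?thesis using e1 by (simp add: insert_absorb)
      qed
      have dy: "d \<in> missing M ends \<phi> k y"
      proof -
        have "d \<in> {1..k}" using d(1) unfolding missing_def by auto
        moreover have "d \<noteq> c" using less.prems(6) e1 unfolding missing_def colors_at_def by auto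
        moreover have "\<forall>f\<in>M. y \<in> ends f \<longrightarrow> f \<noteq> e1 \<longrightarrow> \<psi> f \<noteq> d"
          using less.prems(1) e1 unfolding proper_coloring_def by auto
        ultimately show ?thesis unfolding missing_def colors_at_def \<phi>_def by auto
      qed
      have da: "d \<in> missing M ends \<phi> k a"
        using d(1) e1 av ay unfolding missing_def colors_at_def \<phi>_def by auto
      have "(Rel \<phi> u ^^ m) u a"
      proof -
        from avoid[OF a(1) uv] minimal Suc
        have w: "((\<lambda>a b. Rel \<psi> u a b \<and> a \<noteq> v \<and> b \<noteq> v) ^^ m) u a" by force
        show ?thesis
        proof (rule relpowp_mono[OF _ w])
          fix p q assume pq: "Rel \<psi> u p q \<and> p \<noteq> v \<and> q \<noteq> v"
          then have py: "p \<noteq> y" and qy: "q \<noteq> y" using Hv_ne[OF uy] unfolding Rel_def by auto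
          from pq obtain c' where c': "c' \<in> missing M ends \<psi> k p" "c' \<in> colors_between M ends \<psi> y q"
            unfolding Rel_def arcs_pos by blast
          have "missing M ends \<phi> k p = missing M ends \<psi> k p"
            using e1 pq py unfolding missing_def colors_at_def \<phi>_def by auto
          moreover have "colors_between M ends \<phi> y q = colors_between M ends \<psi> y q"
          proof -
            have "{e\<in>M. ends e = {y,q}} = {e\<in>M. ends e = {y,q}} - {e1}"
              using e1 pq qy by (auto simp: doubleton_eq_iff)
            then show ?thesis unfolding colors_between_def \<phi>_def by (metis (no_types, lifting) fun_upd_other image_cong Diff_iff singletonI)
          qed
          ultimately show "Rel \<phi> u p q" using pq c' unfolding Rel_def arcs_pos by auto
        qed
      qed
      then show False using less.IH[of m \<phi> a d] Suc pr less.prems(2,3,4) dy da by auto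
    qed
  qed
qed


definition Kp :: "('e \<Rightarrow> nat) \<Rightarrow> nat \<Rightarrow> nat \<Rightarrow> 'v \<Rightarrow> 'v \<Rightarrow> bool" where
  "Kp \<psi> \<alpha> \<beta> a b \<longleftrightarrow> (\<exists>e\<in>M. ends e = {a,b} \<and> \<psi> e \<in> {\<alpha>,\<beta>})"

definition ed :: "('e \<Rightarrow> nat) \<Rightarrow> nat \<Rightarrow> nat \<Rightarrow> 'v \<Rightarrow> 'v \<Rightarrow> 'e" where
  "ed \<psi> \<alpha> \<beta> a b = (SOME e. e\<in>M \<and> ends e = {a,b} \<and> \<psi> e \<in> {\<alpha>,\<beta>})"

definition oneD :: "('e \<Rightarrow> nat) \<Rightarrow> nat \<Rightarrow> nat \<Rightarrow> 'v \<Rightarrow> bool" where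
  "oneD \<psi> \<alpha> \<beta> v \<longleftrightarrow> (\<forall>e\<in>M. \<forall>f\<in>M. v \<in> ends e \<longrightarrow> v \<in> ends f \<longrightarrow> \<psi> e \<in> {\<alpha>,\<beta>} \<longrightarrow> \<psi> f \<in> {\<alpha>,\<beta>} \<longrightarrow> e = f)"

lemma ed_prop: "Kp \<psi> \<alpha> \<beta> a b \<Longrightarrow> ed \<psi> \<alpha> \<beta> a b \<in> M \<and> ends (ed \<psi> \<alpha> \<beta> a b) = {a,b} \<and> \<psi> (ed \<psi> \<alpha> \<beta> a b) \<in> {\<alpha>,\<beta>}"
  unfolding Kp_def ed_def by (rule someI_ex) blast

lemma oneD_miss:
  assumes "proper_coloring M ends k \<psi>" "c \<in> {\<alpha>,\<beta>}" "c \<in> missing M ends \<psi> k v"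
  shows "oneD \<psi> \<alpha> \<beta> v"
  unfolding oneD_def
proof (intro ballI impI)
  fix e f assume h: "e \<in> M" "f \<in> M" "v \<in> ends e" "v \<in> ends f" "\<psi> e \<in> {\<alpha>,\<beta>}" "\<psi> f \<in> {\<alpha>,\<beta>}"
  have "\<psi> e \<noteq> c" "\<psi> f \<noteq> c" using assms(3) h unfolding missing_def colors_at_def by auto
  then have "\<psi> e = \<psi> f" using h assms(2) by auto
  then show "e = f" using assms(1) h unfolding proper_coloring_def by blast
qed

lemma three:
  assumes "proper_coloring M ends k \<psi>" "e1 \<in> M" "e2 \<in> M" "e3 \<in> M" "v \<in> ends e1" "v \<in> ends e2" "v \<in> ends e3"
    "\<psi> e1 \<in> {\<alpha>,\<beta>}" "\<psi> e2 \<in> {\<alpha>,\<beta>}" "\<psi> e3 \<in> {\<alpha>,\<beta>}" "e1 \<noteq> e2" "e1 \<noteq> e3" "e2 \<noteq> e3"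
  shows False
proof -
  have "\<psi> e1 \<noteq> \<psi> e2" "\<psi> e1 \<noteq> \<psi> e3" "\<psi> e2 \<noteq> \<psi> e3"
    using assms unfolding proper_coloring_def by blast+
  then show False using assms(8-10) by auto
qed

lemma min_walk:
  assumes "(P ^^ n) s t" "\<forall>m<n. \<not> (P ^^ m) s t"
  shows "\<exists>f. f 0 = s \<and> f n = t \<and> (\<forall>i<n. P (f i) (f (Suc i))) \<and> inj_on f {..n}"
proof -
  obtain f where f: "f 0 = s" "f n = t" "\<forall>i<n. P (f i) (f (Suc i))"
    using assms(1) relpowp_fun_conv by metis
  have "inj_on f {..n}"
  proof (rule ccontr)
    assume "\<not> inj_on f {..n}"
    then obtain i j where ij: "i < j" "j \<le> n" "f i = f j"
      unfolding inj_on_def by (metis atMost_iff linorder_neqE_nat)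
    define g where "g l = (if l \<le> i then f l else f (l + (j - i)))" for l
    have "g 0 = s" using f unfolding g_def by auto
    moreover have "g (n - (j - i)) = t"
    proof (cases "n - (j - i) \<le> i")
      case True
      then have "n - (j - i) = i" "j = n" using ij by auto
      then show ?thesis using f ij unfolding g_def by auto
    next
      case False then show ?thesis using f ij unfolding g_def by auto
    qed
    moreover have "\<forall>l<n - (j - i). P (g l) (g (Suc l))"
    proof (intro allI impI)
      fix l assume l: "l < n - (j - i)"
      show "P (g l) (g (Suc l))"
      proof (cases "l < i")
        case True then show ?thesis using f ij unfolding g_def by auto
      next
        case False
        then have "g l = f (l + (j - i))" using ij unfolding g_def by (cases "l = i") auto
        moreover have "g (Suc l) = f (Suc (l + (j - i)))" using False unfolding g_def by auto
        moreover have "l + (j - i) < n" using l ij by auto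
        ultimately show ?thesis using f by auto
      qed
    qed
    ultimately have "(P ^^ (n - (j - i))) s t" using relpowp_fun_conv by metis
    moreover have "n - (j - i) < n" using ij by auto
    ultimately show False using assms(2) by blast
  qed
  then show ?thesis using f by blast
qed

lemma pair_eq: "{a,b} = {a,c} \<Longrightarrow> b = c"
  by (auto simp: doubleton_eq_iff)

lemma coincide:
  assumes pr: "proper_coloring M ends k \<psi>" and oy: "oneD \<psi> \<alpha> \<beta> y"
    and f: "f 0 = y" "\<forall>i<n. Kp \<psi> \<alpha> \<beta> (f i) (f (Suc i))" "inj_on f {..n}"
    and g: "g 0 = y" "\<forall>i<m. Kp \<psi> \<alpha> \<beta> (g i) (g (Suc i))" "inj_on g {..m}"
  shows "i \<le> n \<Longrightarrow> i \<le> m \<Longrightarrow> f i = g i"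
proof (induction i rule: nat_less_induct)
  case (1 i)
  show ?case
  proof (cases i)
    case 0 then show ?thesis using f g by auto
  next
    case (Suc j)
    note i = Suc
    show ?thesis
    proof (cases j)
      case 0
      have a: "Kp \<psi> \<alpha> \<beta> y (f 1)" "Kp \<psi> \<alpha> \<beta> y (g 1)" using f g 1(2,3) i 0 by auto
      from ed_prop[OF a(1)] ed_prop[OF a(2)] oy
      have "ed \<psi> \<alpha> \<beta> y (f 1) = ed \<psi> \<alpha> \<beta> y (g 1)" unfolding oneD_def by auto
      then have "{y, f 1} = {y, g 1}" using ed_prop[OF a(1)] ed_prop[OF a(2)] by metis
      then show ?thesis using i 0 pair_eq by auto
    next
      case (Suc h)
      have fh: "f h = g h" and fv: "f (Suc h) = g (Suc h)" using 1 i Suc by auto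
      define v where "v = f (Suc h)"
      have k0: "Kp \<psi> \<alpha> \<beta> (f h) v" using f(2) 1(2) i Suc unfolding v_def by auto
      have kf: "Kp \<psi> \<alpha> \<beta> v (f i)" using f(2) 1(2) i Suc unfolding v_def by auto
      have kg: "Kp \<psi> \<alpha> \<beta> v (g i)" using g(2) 1(3) i Suc fv unfolding v_def by auto
      note p0 = ed_prop[OF k0] and pf = ed_prop[OF kf] and pg = ed_prop[OF kg]
      have hv: "f h \<noteq> v" using f(3) 1(2) i Suc unfolding v_def inj_on_def by fastforce
      have fi: "f i \<noteq> f h" using f(3) 1(2) i Suc unfolding inj_on_def by fastforce
      have gi: "g i \<noteq> g h" using g(3) 1(3) i Suc unfolding inj_on_def by fastforce
      have d1: "ed \<psi> \<alpha> \<beta> v (f i) \<noteq> ed \<psi> \<alpha> \<beta> (f h) v"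
      proof
        assume "ed \<psi> \<alpha> \<beta> v (f i) = ed \<psi> \<alpha> \<beta> (f h) v"
        then have "{v, f i} = {f h, v}" using p0 pf by metis
        then show False using hv fi by (auto simp: doubleton_eq_iff)
      qed
      have d2: "ed \<psi> \<alpha> \<beta> v (g i) \<noteq> ed \<psi> \<alpha> \<beta> (f h) v"
      proof
        assume "ed \<psi> \<alpha> \<beta> v (g i) = ed \<psi> \<alpha> \<beta> (f h) v"
        then have "{v, g i} = {f h, v}" using p0 pg by metis
        then show False using hv gi fh by (auto simp: doubleton_eq_iff)
      qed
      have "ed \<psi> \<alpha> \<beta> v (f i) = ed \<psi> \<alpha> \<beta> v (g i)"
      proof (rule ccontr)
        assume "ed \<psi> \<alpha> \<beta> v (f i) \<noteq> ed \<psi> \<alpha> \<beta> v (g i)"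
        then show False using three[OF pr, of "ed \<psi> \<alpha> \<beta> (f h) v" "ed \<psi> \<alpha> \<beta> v (f i)" "ed \<psi> \<alpha> \<beta> v (g i)" v \<alpha> \<beta>]
          p0 pf pg d1 d2 by auto
      qed
      then have "{v, f i} = {v, g i}" using pf pg by metis
      then show ?thesis by (rule pair_eq)
    qed
  qed
qed

lemma end_lemma:
  assumes pr: "proper_coloring M ends k \<psi>" and oy: "oneD \<psi> \<alpha> \<beta> y" and ox: "oneD \<psi> \<alpha> \<beta> x"
    and f: "f 0 = y" "f n = x" "\<forall>i<n. Kp \<psi> \<alpha> \<beta> (f i) (f (Suc i))" "inj_on f {..n}"
    and g: "g 0 = y" "g m = q" "\<forall>i<m. Kp \<psi> \<alpha> \<beta> (g i) (g (Suc i))" "inj_on g {..m}"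
    and nm: "n \<le> m" and xy: "x \<noteq> y" and xq: "x \<noteq> q"
  shows False
proof -
  have eq: "f n = g n" using coincide[OF pr oy f(1,3,4) g(1,3,4)] nm by auto
  have "n \<noteq> m" using eq f g xq by auto
  then have nm': "n < m" using nm by auto
  have "n \<noteq> 0"
  proof
    assume "n = 0" then show False using f(1,2) xy by simp
  qed
  then obtain p where p: "n = Suc p" by (cases n) auto
  have k0: "Kp \<psi> \<alpha> \<beta> (g p) x" using g(3) nm' p eq f(2) by (metis Suc_lessD)
  have k1: "Kp \<psi> \<alpha> \<beta> x (g (Suc n))" using g(3) nm' eq f(2) by auto
  note p0 = ed_prop[OF k0] and p1 = ed_prop[OF k1]
  have "g p \<noteq> g (Suc n)" using g(4) nm' p unfolding inj_on_def by fastforce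
  then have "ed \<psi> \<alpha> \<beta> (g p) x \<noteq> ed \<psi> \<alpha> \<beta> x (g (Suc n))"
    using p0 p1 by (metis doubleton_eq_iff)
  then show False using ox p0 p1 unfolding oneD_def by auto
qed

lemma min_exists: "(P\<^sup>*\<^sup>*) s t \<Longrightarrow> \<exists>n. (P ^^ n) s t \<and> (\<forall>m<n. \<not> (P ^^ m) s t)"
proof -
  assume "(P\<^sup>*\<^sup>*) s t"
  then obtain n where "(P ^^ n) s t" using rtranclp_imp_relpowp by metis
  then show ?thesis using exists_least_iff[of "\<lambda>n. (P ^^ n) s t"] by blast
qed

lemma kempe:
  assumes pr: "proper_coloring M ends k \<psi>" and oy: "oneD \<psi> \<alpha> \<beta> y" and ox: "oneD \<psi> \<alpha> \<beta> x"
    and oq: "oneD \<psi> \<alpha> \<beta> q" and xy: "x \<noteq> y" and qy: "q \<noteq> y" and xq: "x \<noteq> q"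
    and rx: "(Kp \<psi> \<alpha> \<beta>)\<^sup>*\<^sup>* y x" and rq: "(Kp \<psi> \<alpha> \<beta>)\<^sup>*\<^sup>* y q"
  shows False
proof -
  obtain n where n: "(Kp \<psi> \<alpha> \<beta> ^^ n) y x" "\<forall>m<n. \<not> (Kp \<psi> \<alpha> \<beta> ^^ m) y x" using min_exists[OF rx] by blast
  obtain m where m: "(Kp \<psi> \<alpha> \<beta> ^^ m) y q" "\<forall>m'<m. \<not> (Kp \<psi> \<alpha> \<beta> ^^ m') y q" using min_exists[OF rq] by blast
  obtain f where f: "f 0 = y" "f n = x" "\<forall>i<n. Kp \<psi> \<alpha> \<beta> (f i) (f (Suc i))" "inj_on f {..n}"
    using min_walk[OF n] by blast
  obtain g where g: "g 0 = y" "g m = q" "\<forall>i<m. Kp \<psi> \<alpha> \<beta> (g i) (g (Suc i))" "inj_on g {..m}"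
    using min_walk[OF m] by blast
  show False
  proof (cases "n \<le> m")
    case True then show ?thesis using end_lemma[OF pr oy ox f g] xy xq by blast
  next
    case False then show ?thesis using end_lemma[OF pr oy oq g f] qy xq by auto
  qed
qed


definition swp :: "('e \<Rightarrow> nat) \<Rightarrow> nat \<Rightarrow> nat \<Rightarrow> 'v set \<Rightarrow> 'e \<Rightarrow> nat" where
  "swp \<psi> \<alpha> \<beta> C e = (if e \<in> M \<and> \<psi> e \<in> {\<alpha>,\<beta>} \<and> ends e \<subseteq> C then (if \<psi> e = \<alpha> then \<beta> else \<alpha>) else \<psi> e)"

definition closedK where
  "closedK \<psi> \<alpha> \<beta> C \<longleftrightarrow> (\<forall>a b. a \<in> C \<longrightarrow> Kp \<psi> \<alpha> \<beta> a b \<longrightarrow> b \<in> C)"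

lemma ends2: "e \<in> M \<Longrightarrow> v \<in> ends e \<Longrightarrow> \<exists>b. ends e = {v,b}"
proof -
  assume a: "e \<in> M" "v \<in> ends e"
  then have "card (ends e) = 2" using ME lm unfolding loopless_multigraph_def by auto
  then obtain p q where "ends e = {p,q}" by (meson card_2_iff)
  then show ?thesis using a by auto
qed

lemma closed_sub:
  assumes "closedK \<psi> \<alpha> \<beta> C" "e \<in> M" "\<psi> e \<in> {\<alpha>,\<beta>}" "v \<in> ends e" "v \<in> C"
  shows "ends e \<subseteq> C"
proof -
  obtain b where b: "ends e = {v,b}" using ends2 assms by blast
  then have "Kp \<psi> \<alpha> \<beta> v b" using assms unfolding Kp_def by blast
  then show ?thesis using assms b unfolding closedK_def by auto
qed

lemma swap_proper:
  assumes pr: "proper_coloring M ends k \<psi>" and ab: "\<alpha> \<in> {1..k}" "\<beta> \<in> {1..k}"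
    and cl: "closedK \<psi> \<alpha> \<beta> C" and ab': "\<alpha> \<noteq> \<beta>"
  shows "proper_coloring M ends k (swp \<psi> \<alpha> \<beta> C)"
  unfolding proper_coloring_def
proof (intro conjI ballI impI)
  fix e assume "e \<in> M" then show "swp \<psi> \<alpha> \<beta> C e \<in> {1..k}"
    using pr ab unfolding proper_coloring_def swp_def by auto
next
  fix e f assume e: "e \<in> M" and f: "f \<in> M" and ef: "e \<noteq> f \<and> ends e \<inter> ends f \<noteq> {}"
  then obtain v where v: "v \<in> ends e" "v \<in> ends f" by blast
  have ne: "\<psi> e \<noteq> \<psi> f" using pr e f ef unfolding proper_coloring_def by blast
  define Se where "Se = (\<psi> e \<in> {\<alpha>,\<beta>} \<and> ends e \<subseteq> C)"
  define Sf where "Sf = (\<psi> f \<in> {\<alpha>,\<beta>} \<and> ends f \<subseteq> C)"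
  have se: "Se \<Longrightarrow> \<psi> f \<in> {\<alpha>,\<beta>} \<Longrightarrow> Sf" unfolding Se_def Sf_def using closed_sub[OF cl f _ v(2)] v by blast
  have sf: "Sf \<Longrightarrow> \<psi> e \<in> {\<alpha>,\<beta>} \<Longrightarrow> Se" unfolding Se_def Sf_def using closed_sub[OF cl e _ v(1)] v by blast
  show "swp \<psi> \<alpha> \<beta> C e \<noteq> swp \<psi> \<alpha> \<beta> C f"
  proof (cases Se; cases Sf)
    assume "Se" "Sf" then show ?thesis using ne e f ab' unfolding swp_def Se_def Sf_def by auto
  next
    assume "Se" "\<not> Sf" then show ?thesis using se e f unfolding swp_def Se_def Sf_def by auto
  next
    assume "\<not>Se" "Sf" then show ?thesis using sf e f unfolding swp_def Se_def Sf_def by auto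
  next
    assume "\<not>Se" "\<not> Sf" then show ?thesis using ne e f unfolding swp_def Se_def Sf_def by auto
  qed
qed

lemma swp_out: "v \<notin> C \<Longrightarrow> v \<in> ends e \<Longrightarrow> swp \<psi> \<alpha> \<beta> C e = \<psi> e"
  unfolding swp_def by auto

lemma miss_out: "v \<notin> C \<Longrightarrow> missing M ends (swp \<psi> \<alpha> \<beta> C) k v = missing M ends \<psi> k v"
  unfolding missing_def colors_at_def using swp_out[of v C] by (auto simp: image_def)

lemma cb_out: "y \<notin> C \<Longrightarrow> colors_between M ends (swp \<psi> \<alpha> \<beta> C) y b = colors_between M ends \<psi> y b"
  unfolding colors_between_def using swp_out[of y C] by (auto simp: image_def)

lemma miss_in:
  assumes cl: "closedK \<psi> \<alpha> \<beta> C" and xC: "x \<in> C" and ax: "\<alpha> \<in> missing M ends \<psi> k x" and b: "\<beta> \<in> {1..k}"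
  shows "\<beta> \<in> missing M ends (swp \<psi> \<alpha> \<beta> C) k x"
proof -
  have "\<forall>e\<in>M. x \<in> ends e \<longrightarrow> swp \<psi> \<alpha> \<beta> C e \<noteq> \<beta>"
  proof (intro ballI impI)
    fix e assume e: "e \<in> M" "x \<in> ends e"
    have "\<psi> e \<noteq> \<alpha>" using ax e unfolding missing_def colors_at_def by auto
    then show "swp \<psi> \<alpha> \<beta> C e \<noteq> \<beta>"
      using closed_sub[OF cl e(1) _ e(2) xC] e(1) unfolding swp_def by auto
  qed
  then show ?thesis using b unfolding missing_def colors_at_def by auto
qed

lemma arc_pres:
  assumes "Rel \<psi> u a b" "y \<notin> C" "\<beta> \<in> missing M ends \<psi> k y"
    "\<alpha> \<notin> missing M ends \<psi> k a \<or> a \<notin> C"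
  shows "Rel (swp \<psi> \<alpha> \<beta> C) u a b"
proof -
  obtain c where c: "c \<in> missing M ends \<psi> k a" "c \<in> colors_between M ends \<psi> y b"
    using assms(1) unfolding Rel_def arcs_pos by blast
  have cb: "colors_between M ends (swp \<psi> \<alpha> \<beta> C) y b = colors_between M ends \<psi> y b"
    using cb_out[OF assms(2)] .
  have "c \<in> missing M ends (swp \<psi> \<alpha> \<beta> C) k a"
  proof (cases "a \<in> C")
    case False then show ?thesis using miss_out c by auto
  next
    case True
    then have "c \<noteq> \<alpha>" using assms(4) c by auto
    moreover have "c \<noteq> \<beta>" using c assms(3) unfolding missing_def colors_at_def colors_between_def by auto
    ultimately show ?thesis using c unfolding missing_def colors_at_def swp_def by (auto simp: image_def)
  qed
  then show ?thesis using assms(1) c(2) cb unfolding Rel_def arcs_pos by auto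
qed

lemma rt_mono: "(\<And>a b. P a b \<Longrightarrow> Q a b) \<Longrightarrow> P\<^sup>*\<^sup>* s t \<Longrightarrow> Q\<^sup>*\<^sup>* s t"
  by (metis mono_rtranclp)

lemma Kp_sym: "Kp \<psi> \<alpha> \<beta> a b \<Longrightarrow> Kp \<psi> \<alpha> \<beta> b a"
  unfolding Kp_def by (auto simp: insert_commute)

lemma Kp_rt_sym: "(Kp \<psi> \<alpha> \<beta>)\<^sup>*\<^sup>* a b \<Longrightarrow> (Kp \<psi> \<alpha> \<beta>)\<^sup>*\<^sup>* b a"
proof (induction rule: rtranclp_induct)
  case base then show ?case by simp
next
  case (step b c) then show ?case using Kp_sym by (metis converse_rtranclp_into_rtranclp)
qed

lemma closed_comp: "closedK \<psi> \<alpha> \<beta> {b. (Kp \<psi> \<alpha> \<beta>)\<^sup>*\<^sup>* x b}"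
  unfolding closedK_def by auto

lemma lemG:
  assumes pr: "proper_coloring M ends k \<psi>" and ab: "\<alpha> \<noteq> \<beta>"
    and by': "\<beta> \<in> missing M ends \<psi> k y" and ax: "\<alpha> \<in> missing M ends \<psi> k x" and aq: "\<alpha> \<in> missing M ends \<psi> k q"
    and xq: "x \<noteq> q" and xy: "x \<noteq> y" and qy: "q \<noteq> y"
    and e1: "e1 \<in> E" "e1 \<notin> M" "ends e1 = {y,u1}"
    and w1: "(\<lambda>a b. Rel \<psi> u1 a b \<and> \<alpha> \<notin> missing M ends \<psi> k a)\<^sup>*\<^sup>* u1 x"
    and e2: "e2 \<in> E" "e2 \<notin> M" "ends e2 = {y,u2}"
    and w2: "(\<lambda>a b. Rel \<psi> u2 a b \<and> (\<alpha> \<notin> missing M ends \<psi> k a \<or> a = x))\<^sup>*\<^sup>* u2 q"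
  shows False
proof -
  have a1: "\<alpha> \<in> {1..k}" using ax unfolding missing_def by auto
  have b1: "\<beta> \<in> {1..k}" using by' unfolding missing_def by auto
  have oy: "oneD \<psi> \<alpha> \<beta> y" using oneD_miss[OF pr _ by'] by auto
  have ox: "oneD \<psi> \<alpha> \<beta> x" using oneD_miss[OF pr _ ax] by auto
  have oq: "oneD \<psi> \<alpha> \<beta> q" using oneD_miss[OF pr _ aq] by auto
  have nk: "\<not> ((Kp \<psi> \<alpha> \<beta>)\<^sup>*\<^sup>* y x \<and> (Kp \<psi> \<alpha> \<beta>)\<^sup>*\<^sup>* y q)"
    using kempe[OF pr oy ox oq xy qy xq] by blast
  show False
  proof (cases "(Kp \<psi> \<alpha> \<beta>)\<^sup>*\<^sup>* x y")
    case False
    define C where "C = {b. (Kp \<psi> \<alpha> \<beta>)\<^sup>*\<^sup>* x b}"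
    have cl: "closedK \<psi> \<alpha> \<beta> C" unfolding C_def by (rule closed_comp)
    have yC: "y \<notin> C" using False unfolding C_def by auto
    have xC: "x \<in> C" unfolding C_def by auto
    define \<phi> where "\<phi> = swp \<psi> \<alpha> \<beta> C"
    have pr': "proper_coloring M ends k \<phi>" unfolding \<phi>_def using swap_proper[OF pr a1 b1 cl ab] .
    have "(Rel \<phi> u1)\<^sup>*\<^sup>* u1 x"
      using rt_mono[OF _ w1, of "Rel \<phi> u1"] arc_pres[OF _ yC by'] unfolding \<phi>_def by blast
    then obtain n where n: "(Rel \<phi> u1 ^^ n) u1 x" using rtranclp_imp_relpowp by metis
    have "\<beta> \<in> missing M ends \<phi> k y" using by' miss_out[OF yC] unfolding \<phi>_def by auto
    moreover have "\<beta> \<in> missing M ends \<phi> k x" using miss_in[OF cl xC ax b1] unfolding \<phi>_def .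
    ultimately show False using claimA[OF pr' e1 n] by blast
  next
    case True
    have nq: "\<not> (Kp \<psi> \<alpha> \<beta>)\<^sup>*\<^sup>* q y" using nk True Kp_rt_sym by blast
    have nqx: "\<not> (Kp \<psi> \<alpha> \<beta>)\<^sup>*\<^sup>* q x" using nq True by (meson rtranclp_trans)
    define C where "C = {b. (Kp \<psi> \<alpha> \<beta>)\<^sup>*\<^sup>* q b}"
    have cl: "closedK \<psi> \<alpha> \<beta> C" unfolding C_def by (rule closed_comp)
    have yC: "y \<notin> C" using nq unfolding C_def by auto
    have xC: "x \<notin> C" using nqx unfolding C_def by auto
    have qC: "q \<in> C" unfolding C_def by auto
    define \<phi> where "\<phi> = swp \<psi> \<alpha> \<beta> C"
    have pr': "proper_coloring M ends k \<phi>" unfolding \<phi>_def using swap_proper[OF pr a1 b1 cl ab] .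
    have "(Rel \<phi> u2)\<^sup>*\<^sup>* u2 q"
      using rt_mono[OF _ w2, of "Rel \<phi> u2"] arc_pres[OF _ yC by'] xC unfolding \<phi>_def by blast
    then obtain n where n: "(Rel \<phi> u2 ^^ n) u2 q" using rtranclp_imp_relpowp by metis
    have "\<beta> \<in> missing M ends \<phi> k y" using by' miss_out[OF yC] unfolding \<phi>_def by auto
    moreover have "\<beta> \<in> missing M ends \<phi> k q" using miss_in[OF cl qC aq b1] unfolding \<phi>_def .
    ultimately show False using claimA[OF pr' e2 n] by blast
  qed
qed


lemma first_alpha:
  assumes "(Rel \<psi> u)\<^sup>*\<^sup>* a w" "\<alpha> \<in> missing M ends \<psi> k w"
  shows "\<exists>x. (\<lambda>a b. Rel \<psi> u a b \<and> \<alpha> \<notin> missing M ends \<psi> k a)\<^sup>*\<^sup>* a x \<and> \<alpha> \<in> missing M ends \<psi> k x \<and> (Rel \<psi> u)\<^sup>*\<^sup>* x w"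
  using assms(1)
proof (induction rule: converse_rtranclp_induct)
  case base then show ?case using assms(2) by blast
next
  case (step a b)
  then obtain x where x: "(\<lambda>a b. Rel \<psi> u a b \<and> \<alpha> \<notin> missing M ends \<psi> k a)\<^sup>*\<^sup>* b x" "\<alpha> \<in> missing M ends \<psi> k x" "(Rel \<psi> u)\<^sup>*\<^sup>* x w" by blast
  show ?case
  proof (cases "\<alpha> \<in> missing M ends \<psi> k a")
    case True then show ?thesis using step(1,2) by (meson converse_rtranclp_into_rtranclp rtranclp.rtrancl_refl)
  next
    case False
    then have "(\<lambda>a b. Rel \<psi> u a b \<and> \<alpha> \<notin> missing M ends \<psi> k a)\<^sup>*\<^sup>* a x"
      using step(1) x(1) converse_rtranclp_into_rtranclp[where r="\<lambda>a b. Rel \<psi> u a b \<and> \<alpha> \<notin> missing M ends \<psi> k a"] by blast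
    then show ?thesis using x by blast
  qed
qed

lemma second_alpha:
  assumes "(Rel \<psi> u)\<^sup>*\<^sup>* a w" "\<alpha> \<in> missing M ends \<psi> k w" "w \<noteq> x"
  shows "\<exists>q. (\<lambda>a b. Rel \<psi> u a b \<and> (\<alpha> \<notin> missing M ends \<psi> k a \<or> a = x))\<^sup>*\<^sup>* a q \<and> \<alpha> \<in> missing M ends \<psi> k q \<and> q \<noteq> x"
  using assms(1)
proof (induction rule: converse_rtranclp_induct)
  case base then show ?case using assms(2,3) by blast
next
  case (step a b)
  then obtain q where q: "(\<lambda>a b. Rel \<psi> u a b \<and> (\<alpha> \<notin> missing M ends \<psi> k a \<or> a = x))\<^sup>*\<^sup>* b q" "\<alpha> \<in> missing M ends \<psi> k q" "q \<noteq> x" by blast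
  show ?case
  proof (cases "\<alpha> \<in> missing M ends \<psi> k a \<and> a \<noteq> x")
    case True then show ?thesis by blast
  next
    case False
    then have "(\<lambda>a b. Rel \<psi> u a b \<and> (\<alpha> \<notin> missing M ends \<psi> k a \<or> a = x))\<^sup>*\<^sup>* a q"
      using step(1) q(1) converse_rtranclp_into_rtranclp[where r="\<lambda>a b. Rel \<psi> u a b \<and> (\<alpha> \<notin> missing M ends \<psi> k a \<or> a = x)"] by blast
    then show ?thesis using q by blast
  qed
qed

lemma reach_ne_y: "(Rel \<psi> u)\<^sup>*\<^sup>* u v \<Longrightarrow> u \<noteq> y \<Longrightarrow> v \<noteq> y"
proof (induction rule: rtranclp_induct)
  case base then show ?case by simp
next
  case (step b c) then show ?case using Hv_ne unfolding Rel_def by blast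
qed

lemma U_edge:
  assumes "u \<in> Uk E M ends k y"
  shows "\<exists>e0\<in>E. e0 \<notin> M \<and> ends e0 = {y,u}"
proof (rule ccontr)
  assume "\<not> ?thesis"
  then have "{e\<in>E. ends e = {y,u}} \<subseteq> {e\<in>M. ends e = {y,u}}" by auto
  then have "card {e\<in>E. ends e = {y,u}} \<le> card {e\<in>M. ends e = {y,u}}"
    using finM by (intro card_mono) auto
  then show False using assms unfolding Uk_def mult_def by auto
qed

lemma U_ne: "u \<in> Uk E M ends k y \<Longrightarrow> u \<noteq> y"
  unfolding Uk_def Fk_def using nbr_ne by auto

lemma A': 
  assumes pr: "proper_coloring M ends k \<psi>" and u: "u \<in> Uk E M ends k y" and r: "(Rel \<psi> u)\<^sup>*\<^sup>* u v"
  shows "missing M ends \<psi> k y \<inter> missing M ends \<psi> k v = {}"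
proof -
  obtain e0 where e0: "e0 \<in> E" "e0 \<notin> M" "ends e0 = {y,u}" using U_edge[OF u] by blast
  obtain n where "(Rel \<psi> u ^^ n) u v" using r rtranclp_imp_relpowp by metis
  then show ?thesis using claimA[OF pr e0] by blast
qed

lemma missing_y_ne:
  assumes "deg M ends y < k"
  shows "missing M ends \<psi> k y \<noteq> {}"
proof
  assume "missing M ends \<psi> k y = {}"
  then have "{1..k} \<subseteq> \<psi> ` {e\<in>M. y \<in> ends e}" unfolding missing_def colors_at_def by auto
  then have "card {1..k} \<le> card (\<psi> ` {e\<in>M. y \<in> ends e})" using finM by (intro card_mono) auto
  also have "\<dots> \<le> card {e\<in>M. y \<in> ends e}" using finM by (intro card_image_le) auto
  finally show False using assms unfolding deg_def by auto
qed

lemma nonremote: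
  assumes "w \<in> nbrs M ends y" "\<not> remote E M ends \<psi> k y w"
  shows "\<exists>u\<in>Uk E M ends k y. (Rel \<psi> u)\<^sup>*\<^sup>* u w"
  using assms unfolding remote_def reach_conv by blast

lemma L1: "(\<lambda>a b. R a b \<and> P a)\<^sup>*\<^sup>* s t \<Longrightarrow> R\<^sup>*\<^sup>* s t"
  by (erule rt_mono[rotated]) auto

lemma L2: "(\<lambda>a b. R a b \<and> P a)\<^sup>*\<^sup>* s t \<Longrightarrow> (\<lambda>a b. R a b \<and> (P a \<or> Q a))\<^sup>*\<^sup>* s t"
  by (erule rt_mono[rotated]) auto

lemma both_nonremote:
  assumes pr: "proper_coloring M ends k \<psi>" and dy: "deg M ends y < k"
    and w: "w \<in> nbrs M ends y" "\<not> remote E M ends \<psi> k y w"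
    and z: "z \<in> nbrs M ends y" "\<not> remote E M ends \<psi> k y z" and wz: "w \<noteq> z"
  shows "missing M ends \<psi> k w \<inter> missing M ends \<psi> k z = {}"
proof (rule ccontr)
  assume "\<not> ?thesis"
  then obtain \<alpha> where aw: "\<alpha> \<in> missing M ends \<psi> k w" and az: "\<alpha> \<in> missing M ends \<psi> k z" by blast
  obtain u1 where u1: "u1 \<in> Uk E M ends k y" "(Rel \<psi> u1)\<^sup>*\<^sup>* u1 w" using nonremote[OF w] by blast
  obtain u2 where u2: "u2 \<in> Uk E M ends k y" "(Rel \<psi> u2)\<^sup>*\<^sup>* u2 z" using nonremote[OF z] by blast
  obtain e1 where e1: "e1 \<in> E" "e1 \<notin> M" "ends e1 = {y,u1}" using U_edge[OF u1(1)] by blast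
  obtain e2 where e2: "e2 \<in> E" "e2 \<notin> M" "ends e2 = {y,u2}" using U_edge[OF u2(1)] by blast
  obtain \<beta> where by': "\<beta> \<in> missing M ends \<psi> k y" using missing_y_ne[OF dy] by blast
  have "\<alpha> \<notin> missing M ends \<psi> k y" using A'[OF pr u1] aw by blast
  then have ab: "\<alpha> \<noteq> \<beta>" using by' by auto
  obtain x1 where x1: "(\<lambda>a b. Rel \<psi> u1 a b \<and> \<alpha> \<notin> missing M ends \<psi> k a)\<^sup>*\<^sup>* u1 x1" "\<alpha> \<in> missing M ends \<psi> k x1" "(Rel \<psi> u1)\<^sup>*\<^sup>* x1 w"
    using first_alpha[OF u1(2) aw] by blast
  obtain x2 where x2: "(\<lambda>a b. Rel \<psi> u2 a b \<and> \<alpha> \<notin> missing M ends \<psi> k a)\<^sup>*\<^sup>* u2 x2" "\<alpha> \<in> missing M ends \<psi> k x2" "(Rel \<psi> u2)\<^sup>*\<^sup>* x2 z"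
    using first_alpha[OF u2(2) az] by blast
  have r1: "(Rel \<psi> u1)\<^sup>*\<^sup>* u1 x1" by (rule L1[OF x1(1)])
  have r2: "(Rel \<psi> u2)\<^sup>*\<^sup>* u2 x2" by (rule L1[OF x2(1)])
  have x1y: "x1 \<noteq> y" using reach_ne_y[OF r1 U_ne[OF u1(1)]] .
  have x2y: "x2 \<noteq> y" using reach_ne_y[OF r2 U_ne[OF u2(1)]] .
  show False
  proof (cases "x1 = x2")
    case False
    have "(\<lambda>a b. Rel \<psi> u2 a b \<and> (\<alpha> \<notin> missing M ends \<psi> k a \<or> a = x1))\<^sup>*\<^sup>* u2 x2"
      by (rule L2[OF x2(1)])
    then show False by (rule lemG[OF pr ab by' x1(2) x2(2) False x1y x2y e1 x1(1) e2])
  next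
    case True
    show False
    proof (cases "w = x1")
      case False
      obtain q where q: "(\<lambda>a b. Rel \<psi> u1 a b \<and> (\<alpha> \<notin> missing M ends \<psi> k a \<or> a = x1))\<^sup>*\<^sup>* x1 q" "\<alpha> \<in> missing M ends \<psi> k q" "q \<noteq> x1"
        using second_alpha[OF x1(3) aw False] by blast
      have "(\<lambda>a b. Rel \<psi> u1 a b \<and> (\<alpha> \<notin> missing M ends \<psi> k a \<or> a = x1))\<^sup>*\<^sup>* u1 x1"
        by (rule L2[OF x1(1)])
      then have qq: "(\<lambda>a b. Rel \<psi> u1 a b \<and> (\<alpha> \<notin> missing M ends \<psi> k a \<or> a = x1))\<^sup>*\<^sup>* u1 q"
        using q(1) by (rule rtranclp_trans)
      have "(Rel \<psi> u1)\<^sup>*\<^sup>* u1 q" by (rule L1[OF qq])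
      then have qy: "q \<noteq> y" using reach_ne_y[OF _ U_ne[OF u1(1)]] by blast
      show False using lemG[OF pr ab by' x1(2) q(2) q(3)[symmetric] x1y qy e1 x1(1) e1 qq] .
    next
      case wx: True
      then have zx: "z \<noteq> x2" using wz True by auto
      obtain q where q: "(\<lambda>a b. Rel \<psi> u2 a b \<and> (\<alpha> \<notin> missing M ends \<psi> k a \<or> a = x2))\<^sup>*\<^sup>* x2 q" "\<alpha> \<in> missing M ends \<psi> k q" "q \<noteq> x2"
        using second_alpha[OF x2(3) az zx] by blast
      have "(\<lambda>a b. Rel \<psi> u2 a b \<and> (\<alpha> \<notin> missing M ends \<psi> k a \<or> a = x2))\<^sup>*\<^sup>* u2 x2"
        by (rule L2[OF x2(1)])
      then have qq: "(\<lambda>a b. Rel \<psi> u2 a b \<and> (\<alpha> \<notin> missing M ends \<psi> k a \<or> a = x2))\<^sup>*\<^sup>* u2 q"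
        using q(1) by (rule rtranclp_trans)
      have "(Rel \<psi> u2)\<^sup>*\<^sup>* u2 q" by (rule L1[OF qq])
      then have qy: "q \<noteq> y" using reach_ne_y[OF _ U_ne[OF u2(1)]] by blast
      show False using lemG[OF pr ab by' x2(2) q(2) q(3)[symmetric] x2y qy e2 x2(1) e2 qq] .
    qed
  qed
qed

lemma y_not_remote: "\<not> remote E M ends \<psi> k y y"
  unfolding remote_def using y_nbr by auto

lemma remote_vs_y:
  "colors_between M ends \<psi> y w \<inter> missing M ends \<psi> k y = {}"
  unfolding colors_between_def missing_def colors_at_def by auto

lemma nonremote_vs_y:
  assumes pr: "proper_coloring M ends k \<psi>" and "z \<in> nbrs M ends y" "\<not> remote E M ends \<psi> k y z"
  shows "missing M ends \<psi> k y \<inter> missing M ends \<psi> k z = {}"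
  using nonremote[OF assms(2,3)] A'[OF pr] by blast

lemma remote_vs_nonremote:
  assumes "remote E M ends \<psi> k y w" "z \<in> nbrs M ends y" "\<not> remote E M ends \<psi> k y z"
  shows "colors_between M ends \<psi> y w \<inter> missing M ends \<psi> k z = {}"
proof (rule ccontr)
  assume "\<not> ?thesis"
  then obtain c where c: "c \<in> missing M ends \<psi> k z" "c \<in> colors_between M ends \<psi> y w" by blast
  obtain u where u: "u \<in> Uk E M ends k y" "(Rel \<psi> u)\<^sup>*\<^sup>* u z" using nonremote[OF assms(2,3)] by blast
  have w: "w \<in> nbrs M ends y" using assms(1) unfolding remote_def by auto
  have "Rel \<psi> u z w" unfolding Rel_def arcs_pos H_verts_def using c w assms(2) by auto
  then have "(Rel \<psi> u)\<^sup>*\<^sup>* u w" using u(2) by auto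
  then show False using assms(1) u(1) unfolding remote_def reach_conv by blast
qed

lemma remote_vs_remote:
  assumes pr: "proper_coloring M ends k \<psi>" and wz: "w \<noteq> z"
  shows "colors_between M ends \<psi> y w \<inter> colors_between M ends \<psi> y z = {}"
proof (rule ccontr)
  assume "\<not> ?thesis"
  then obtain e f where ef: "e \<in> M" "ends e = {y,w}" "f \<in> M" "ends f = {y,z}" "\<psi> e = \<psi> f"
    unfolding colors_between_def by auto
  have "e \<noteq> f" using ef wz by (metis pair_eq)
  then show False using pr ef unfolding proper_coloring_def by auto
qed

lemma main:
  assumes pr: "proper_coloring M ends k \<psi>" and dy: "deg M ends y < k"
    and w: "w \<in> nbrs M ends y \<union> {y}" and z: "z \<in> nbrs M ends y \<union> {y}" and wz: "w \<noteq> z"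
  shows "Cset E M ends \<psi> k y w \<inter> Cset E M ends \<psi> k y z = {}"
proof -
  have rn: "remote E M ends \<psi> k y v \<Longrightarrow> v \<in> nbrs M ends y" for v unfolding remote_def by auto
  show ?thesis
  proof (cases "w = y")
    case True
    then have zn: "z \<in> nbrs M ends y" using z wz by auto
    show ?thesis using True y_not_remote remote_vs_y[where w=z] nonremote_vs_y[OF pr zn]
      unfolding Cset_def by auto
  next
    case wy: False
    then have wn: "w \<in> nbrs M ends y" using w by auto
    show ?thesis
    proof (cases "z = y")
      case True
      show ?thesis using True y_not_remote remote_vs_y[where w=w] nonremote_vs_y[OF pr wn]
        unfolding Cset_def by auto
    next
      case False
      then have zn: "z \<in> nbrs M ends y" using z by auto
      have a: "remote E M ends \<psi> k y w \<Longrightarrow> \<not> remote E M ends \<psi> k y z \<Longrightarrow> colors_between M ends \<psi> y w \<inter> missing M ends \<psi> k z = {}"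
        using remote_vs_nonremote[where \<psi>=\<psi> and w=w, OF _ zn] by simp
      have b: "remote E M ends \<psi> k y z \<Longrightarrow> \<not> remote E M ends \<psi> k y w \<Longrightarrow> colors_between M ends \<psi> y z \<inter> missing M ends \<psi> k w = {}"
        using remote_vs_nonremote[where \<psi>=\<psi> and w=z, OF _ wn] by simp
      show ?thesis
      proof (cases "remote E M ends \<psi> k y w"; cases "remote E M ends \<psi> k y z")
        assume "remote E M ends \<psi> k y w" "remote E M ends \<psi> k y z"
        then show ?thesis using remote_vs_remote[OF pr wz] unfolding Cset_def by simp
      next
        assume "remote E M ends \<psi> k y w" "\<not> remote E M ends \<psi> k y z"
        then show ?thesis using a unfolding Cset_def by simp
      next
        assume "\<not> remote E M ends \<psi> k y w" "remote E M ends \<psi> k y z"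
        then show ?thesis using b unfolding Cset_def by (simp add: Int_commute)
      next
        assume "\<not> remote E M ends \<psi> k y w" "\<not> remote E M ends \<psi> k y z"
        then show ?thesis using both_nonremote[OF pr dy wn _ zn _ wz] unfolding Cset_def by simp
      qed
    qed
  qed
qed

end

theorem mainTheorem4:
  fixes V :: "'v set" and E :: "'e set" and ends :: "'e \<Rightarrow> 'v set"
    and k :: nat and M :: "'e set" and \<psi> :: "'e \<Rightarrow> nat" and y w z :: 'v
  assumes "loopless_multigraph V E ends"
    and "k \<ge> 1"
    and "maximal_k_colorable_sub E ends k M"
    and "proper_coloring M ends k \<psi>"
    and "y \<in> V"
    and "deg M ends y < k"
    and "w \<in> nbrs M ends y \<union> {y}"
    and "z \<in> nbrs M ends y \<union> {y}"
    and "w \<noteq> z"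
  shows "Cset E M ends \<psi> k y w \<inter> Cset E M ends \<psi> k y z = {}"
  using S.main[OF S.intro[OF assms(1,3)] assms(4,6,7,8,9)] .

end
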